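(* In the algebra $\mathcal O_q$ defined in the context, for all $n\in\mathbb N$: $$\mathcal W_{-n}=-(q-q^{-1})^{-1}\sum_{k=0}^n\sum_{\ell=0}^k\binom{k}{\ell}q^{2\ell-k}[2]_q^{-k-2}\tilde{\mathcal G}_{n-k}B_{(k-2\ell)\delta+\alpha_0},$$ $$\mathcal W_{n+1}=-(q-q^{-1})^{-1}\sum_{k=0}^n\sum_{\ell=0}^k\binom{k}{\ell}q^{k-2\ell}[2]_q^{-k-2}\tilde{\mathcal G}_{n-k}B_{(k-2\ell)\delta+\alpha_1}.$$
   Context: All algebras are associative and unital over a field $\mathbb F$; $q\in\mathbb F$ is nonzero and not a root of unity; $[n]_q=(q^n-q^{-n})/(q-q^{-1})$. For elements $X,Y$ of an algebra, $[X,Y]=XY-YX$ and $[X,Y]_q=qXY-q^{-1}YX$. Let $\rho=-(q^2-q^{-2})^2$. The algebra $\mathcal O_q$ is defined by generators $\mathcal W_{-k},\mathcal W_{k+1},\mathcal G_{k+1},\tilde{\mathcal G}_{k+1}$ ($k\in\mathbb N$) and the following relations for all $k,\ell\in\mathbb N$: $[\mathcal W_0,\mathcal W_{k+1}]=[\mathcal W_{-k},\mathcal W_1]=(\tilde{\mathcal G}_{k+1}-\mathcal G_{k+1})/(q+q^{-1})$; $[\mathcal W_0,\mathcal G_{k+1}]_q=[\tilde{\mathcal G}_{k+1},\mathcal W_0]_q=\rho\mathcal W_{-k-1}-\rho\mathcal W_{k+1}$; $[\mathcal G_{k+1},\mathcal W_1]_q=[\mathcal W_1,\tilde{\mathcal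 G}_{k+1}]_q=\rho\mathcal W_{k+2}-\rho\mathcal W_{-k}$; $[\mathcal W_{-k},\mathcal W_{-\ell}]=0$, $[\mathcal W_{k+1},\mathcal W_{\ell+1}]=0$; $[\mathcal W_{-k},\mathcal W_{\ell+1}]+[\mathcal W_{k+1},\mathcal W_{-\ell}]=0$; $[\mathcal W_{-k},\mathcal G_{\ell+1}]+[\mathcal G_{k+1},\mathcal W_{-\ell}]=0$; $[\mathcal W_{-k},\tilde{\mathcal G}_{\ell+1}]+[\tilde{\mathcal G}_{k+1},\mathcal W_{-\ell}]=0$; $[\mathcal W_{k+1},\mathcal G_{\ell+1}]+[\mathcal G_{k+1},\mathcal W_{\ell+1}]=0$; $[\mathcal W_{k+1},\tilde{\mathcal G}_{\ell+1}]+[\tilde{\mathcal G}_{k+1},\mathcal W_{\ell+1}]=0$; $[\mathcal G_{k+1},\mathcal G_{\ell+1}]=0$, $[\tilde{\mathcal G}_{k+1},\tilde{\mathcal G}_{\ell+1}]=0$; $[\tilde{\mathcal G}_{k+1},\mathcal G_{\ell+1}]+[\mathcal G_{k+1},\tilde{\mathcal G}_{\ell+1}]=0$. Convention: $\tilde{\mathcal G}_0=-(q-q^{-1})[2]_q^2$. Define $B_\delta=q^{-2}\mathcal W_1\mathcal W_0-\mathcal W_0\mathcal W_1$; $B_{\alpha_0}=\mathcal W_0$, $B_{\delta+\alpha_0}=\mathcal W_1+\frac{q[B_\delta,\mathcal W_0]}{(q-q^{-1})(q^2-q^{-2})}$, $B_{n\delta+\alpha_0}=B_{(n-2)\delta+\alpha_0}+\frac{q[B_\delta,B_{(n-1)\delta+\alpha_0}]}{(q-q^{-1})(q^2-q^{-2})}$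 for $n\ge2$; $B_{\alpha_1}=\mathcal W_1$, $B_{\delta+\alpha_1}=\mathcal W_0-\frac{q[B_\delta,\mathcal W_1]}{(q-q^{-1})(q^2-q^{-2})}$, $B_{n\delta+\alpha_1}=B_{(n-2)\delta+\alpha_1}-\frac{q[B_\delta,B_{(n-1)\delta+\alpha_1}]}{(q-q^{-1})(q^2-q^{-2})}$ for $n\ge2$. For negative integers $k$, set $B_{k\delta+\alpha_0}=B_{(-k-1)\delta+\alpha_1}$ and $B_{k\delta+\alpha_1}=B_{(-k-1)\delta+\alpha_0}$. *)

theory Defs
  imports Main
begin

text \<open>An F-algebra is modelled as a ring 'a together with a central unital ring
homomorphism emb from the field 'f into 'a (scalar c acts as emb c * _).\<close>

definition central_emb :: "('f::field \<Rightarrow> 'a::ring_1) \<Rightarrow> bool" where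
  "central_emb emb \<longleftrightarrow> emb 1 = 1 \<and> (\<forall>x y. emb (x + y) = emb x + emb y)
     \<and> (\<forall>x y. emb (x * y) = emb x * emb y) \<and> (\<forall>x a. emb x * a = a * emb x)"

definition comm :: "'a::ring_1 \<Rightarrow> 'a \<Rightarrow> 'a" where
  "comm x y = x * y - y * x"

definition qcomm :: "('f::field \<Rightarrow> 'a::ring_1) \<Rightarrow> 'f \<Rightarrow> 'a \<Rightarrow> 'a \<Rightarrow> 'a" where
  "qcomm emb q x y = emb q * x * y - emb (inverse q) * y * x"

definition qint :: "'f::field \<Rightarrow> nat \<Rightarrow> 'f" where
  "qint q n = (q ^ n - inverse q ^ n) / (q - inverse q)"

definition rho :: "'f::field \<Rightarrow> 'f" where
  "rho q = - ((q ^ 2 - inverse q ^ 2) ^ 2)"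

text \<open>Generators: Wm k = W_{-k}, Wp k = W_{k+1}, G k = G_{k+1}, Gt k = tilde G_{k+1}.\<close>

definition Oq_rels :: "('f::field \<Rightarrow> 'a::ring_1) \<Rightarrow> 'f \<Rightarrow> (nat \<Rightarrow> 'a) \<Rightarrow> (nat \<Rightarrow> 'a)
    \<Rightarrow> (nat \<Rightarrow> 'a) \<Rightarrow> (nat \<Rightarrow> 'a) \<Rightarrow> bool" where
  "Oq_rels emb q Wm Wp G Gt \<longleftrightarrow> (\<forall>k l.
     comm (Wm 0) (Wp k) = emb (inverse (q + inverse q)) * (Gt k - G k)
   \<and> comm (Wm k) (Wp 0) = emb (inverse (q + inverse q)) * (Gt k - G k)
   \<and> qcomm emb q (Wm 0) (G k) = emb (rho q) * (Wm (k+1) - Wp k)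
   \<and> qcomm emb q (Gt k) (Wm 0) = emb (rho q) * (Wm (k+1) - Wp k)
   \<and> qcomm emb q (G k) (Wp 0) = emb (rho q) * (Wp (k+1) - Wm k)
   \<and> qcomm emb q (Wp 0) (Gt k) = emb (rho q) * (Wp (k+1) - Wm k)
   \<and> comm (Wm k) (Wm l) = 0 \<and> comm (Wp k) (Wp l) = 0
   \<and> comm (Wm k) (Wp l) + comm (Wp k) (Wm l) = 0
   \<and> comm (Wm k) (G l) + comm (G k) (Wm l) = 0
   \<and> comm (Wm k) (Gt l) + comm (Gt k) (Wm l) = 0
   \<and> comm (Wp k) (G l) + comm (G k) (Wp l) = 0
   \<and> comm (Wp k) (Gt l) + comm (Gt k) (Wp l) = 0
   \<and> comm (G k) (G l) = 0 \<and> comm (Gt k) (Gt l) = 0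
   \<and> comm (Gt k) (G l) + comm (G k) (Gt l) = 0)"

definition Gtilde :: "('f::field \<Rightarrow> 'a::ring_1) \<Rightarrow> 'f \<Rightarrow> (nat \<Rightarrow> 'a) \<Rightarrow> nat \<Rightarrow> 'a" where
  "Gtilde emb q Gt n = (if n = 0 then emb (- (q - inverse q) * qint q 2 ^ 2) else Gt (n - 1))"

definition Bdelta :: "('f::field \<Rightarrow> 'a::ring_1) \<Rightarrow> 'f \<Rightarrow> (nat \<Rightarrow> 'a) \<Rightarrow> (nat \<Rightarrow> 'a) \<Rightarrow> 'a" where
  "Bdelta emb q Wm Wp = emb (inverse q ^ 2) * Wp 0 * Wm 0 - Wm 0 * Wp 0"

definition Bcoef :: "'f::field \<Rightarrow> 'f" where
  "Bcoef q = q / ((q - inverse q) * (q ^ 2 - inverse q ^ 2))"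

text \<open>B0 emb q Wm Wp n = B_{n delta + alpha_0}, B1 ... n = B_{n delta + alpha_1}, n \<ge> 0.\<close>
fun B0 :: "('f::field \<Rightarrow> 'a::ring_1) \<Rightarrow> 'f \<Rightarrow> (nat \<Rightarrow> 'a) \<Rightarrow> (nat \<Rightarrow> 'a) \<Rightarrow> nat \<Rightarrow> 'a" where
  "B0 emb q Wm Wp 0 = Wm 0"
| "B0 emb q Wm Wp (Suc 0) = Wp 0 + emb (Bcoef q) * comm (Bdelta emb q Wm Wp) (Wm 0)"
| "B0 emb q Wm Wp (Suc (Suc n)) = B0 emb q Wm Wp n
     + emb (Bcoef q) * comm (Bdelta emb q Wm Wp) (B0 emb q Wm Wp (Suc n))"

fun B1 :: "('f::field \<Rightarrow> 'a::ring_1) \<Rightarrow> 'f \<Rightarrow> (nat \<Rightarrow> 'a) \<Rightarrow> (nat \<Rightarrow> 'a) \<Rightarrow> nat \<Rightarrow> 'a" where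
  "B1 emb q Wm Wp 0 = Wp 0"
| "B1 emb q Wm Wp (Suc 0) = Wm 0 - emb (Bcoef q) * comm (Bdelta emb q Wm Wp) (Wp 0)"
| "B1 emb q Wm Wp (Suc (Suc n)) = B1 emb q Wm Wp n
     - emb (Bcoef q) * comm (Bdelta emb q Wm Wp) (B1 emb q Wm Wp (Suc n))"

text \<open>Integer-indexed: B_{k delta + alpha_0} and B_{k delta + alpha_1} for k \<in> Z.\<close>
definition B0i :: "('f::field \<Rightarrow> 'a::ring_1) \<Rightarrow> 'f \<Rightarrow> (nat \<Rightarrow> 'a) \<Rightarrow> (nat \<Rightarrow> 'a) \<Rightarrow> int \<Rightarrow> 'a" where
  "B0i emb q Wm Wp k = (if k \<ge> 0 then B0 emb q Wm Wp (nat k) else B1 emb q Wm Wp (nat (- k - 1)))"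

definition B1i :: "('f::field \<Rightarrow> 'a::ring_1) \<Rightarrow> 'f \<Rightarrow> (nat \<Rightarrow> 'a) \<Rightarrow> (nat \<Rightarrow> 'a) \<Rightarrow> int \<Rightarrow> 'a" where
  "B1i emb q Wm Wp k = (if k \<ge> 0 then B1 emb q Wm Wp (nat k) else B0 emb q Wm Wp (nat (- k - 1)))"

end

theory Submission
  imports Defs
begin


locale oq =
  fixes emb :: "'f::field \<Rightarrow> 'a::ring_1" and q :: 'f and Wm Wp G Gt :: "nat \<Rightarrow> 'a"
  assumes q0: "q \<noteq> 0" and qroot: "\<forall>m::nat. m > 0 \<longrightarrow> q ^ m \<noteq> 1"
    and ce: "central_emb emb" and rels: "Oq_rels emb q Wm Wp G Gt"
begin

definition sm :: "'f \<Rightarrow> 'a \<Rightarrow> 'a" where "sm c x = emb c * x"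

lemma e_add: "emb (x + y) = emb x + emb y" using ce unfolding central_emb_def by blast
lemma e_mult: "emb (x * y) = emb x * emb y" using ce unfolding central_emb_def by blast
lemma e_one: "emb 1 = 1" using ce unfolding central_emb_def by blast
lemma e_cen: "emb x * a = a * emb x" using ce unfolding central_emb_def by blast
lemma e_zero: "emb 0 = 0" using e_add[of 0 0] by simp
lemma e_minus: "emb (- x) = - emb x" using e_add[of x "-x"] by (simp add: e_zero minus_unique)
lemma e_diff: "emb (x - y) = emb x - emb y" using e_add[of x "-y"] by (simp add: e_minus)

lemma sm_left[simp]: "sm c x * y = sm c (x * y)" by (simp add: sm_def mult.assoc)
lemma sm_right[simp]: "x * sm c y = sm c (x * y)" by (metis mult.assoc e_cen sm_def)
lemma sm_sm[simp]: "sm c (sm d x) = sm (c * d) x" by (simp add: sm_def e_mult mult.assoc)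
lemma sm_add[simp]: "sm c (x + y) = sm c x + sm c y" by (simp add: sm_def distrib_left)
lemma sm_diff[simp]: "sm c (x - y) = sm c x - sm c y" by (simp add: sm_def right_diff_distrib)
lemma sm_uminus[simp]: "sm c (- x) = - sm c x" by (simp add: sm_def)
lemma sm_one[simp]: "sm 1 x = x" by (simp add: sm_def e_one)
lemma sm_zero[simp]: "sm 0 x = 0" "sm c 0 = 0" by (simp_all add: sm_def e_zero)
lemma sm_neg[simp]: "sm (- c) x = - sm c x" by (simp add: sm_def e_minus)
lemma sm_addc: "sm (c + d) x = sm c x + sm d x" by (simp add: sm_def e_add distrib_right)
lemma sm_diffc: "sm (c - d) x = sm c x - sm d x" by (simp add: sm_def e_diff left_diff_distrib)


lemma rel: "\<And>k l. comm (Wm 0) (Wp k) = emb (inverse (q + inverse q)) * (Gt k - G k)"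
   "\<And>k. comm (Wm k) (Wp 0) = emb (inverse (q + inverse q)) * (Gt k - G k)"
   "\<And>k. qcomm emb q (Wm 0) (G k) = emb (rho q) * (Wm (k+1) - Wp k)"
   "\<And>k. qcomm emb q (Gt k) (Wm 0) = emb (rho q) * (Wm (k+1) - Wp k)"
   "\<And>k. qcomm emb q (G k) (Wp 0) = emb (rho q) * (Wp (k+1) - Wm k)"
   "\<And>k. qcomm emb q (Wp 0) (Gt k) = emb (rho q) * (Wp (k+1) - Wm k)"
   "\<And>k l. comm (Wm k) (Wm l) = 0" "\<And>k l. comm (Wp k) (Wp l) = 0"
  using rels unfolding Oq_rels_def by auto

definition h where "h = inverse (q + inverse q)"
definition r where "r = rho q"
abbreviation W0 where "W0 \<equiv> Wm 0"
abbreviation W1 where "W1 \<equiv> Wp 0"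
definition Bd where "Bd = sm (inverse q ^ 2) (W1 * W0) - W0 * W1"

lemma R_A: "sm q (Gt k * W0) - sm (inverse q) (W0 * Gt k) = sm r (Wm (k+1) - Wp k)"
  using rel(4)[of k] by (simp add: qcomm_def sm_def r_def mult.assoc)
lemma R_C: "sm q (W1 * Gt k) - sm (inverse q) (Gt k * W1) = sm r (Wp (k+1) - Wm k)"
  using rel(6)[of k] by (simp add: qcomm_def sm_def r_def mult.assoc)
lemma R_G0: "sm q (W0 * G k) - sm (inverse q) (G k * W0) = sm r (Wm (k+1) - Wp k)"
  using rel(3)[of k] by (simp add: qcomm_def sm_def r_def mult.assoc)
lemma R_G1: "sm q (G k * W1) - sm (inverse q) (W1 * G k) = sm r (Wp (k+1) - Wm k)"
  using rel(5)[of k] by (simp add: qcomm_def sm_def r_def mult.assoc)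
lemma C0p: "W0 * Wp k = Wp k * W0 + sm h (Gt k - G k)"
  using rel(1)[of k] by (simp add: comm_def sm_def h_def algebra_simps)
lemma Cm1: "Wm k * W1 = W1 * Wm k + sm h (Gt k - G k)"
  using rel(2)[of k] by (simp add: comm_def sm_def h_def algebra_simps)
lemma Cmm: "Wm k * Wm l = Wm l * Wm k"
  using rel(7)[of k l] by (simp add: comm_def)
lemma Cpp: "Wp k * Wp l = Wp l * Wp k"
  using rel(8)[of k l] by (simp add: comm_def)

lemma q_facts: "q - inverse q \<noteq> 0" "q + inverse q \<noteq> 0"
proof -
  have "q^2 \<noteq> 1" using qroot by auto
  have "q^4 \<noteq> 1" using qroot by auto
  show "q - inverse q \<noteq> 0"
  proof
    assume "q - inverse q = 0" then have "q * q = 1" using q0 by (simp add: field_simps)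
    then show False using \<open>q^2 \<noteq> 1\<close> by (simp add: power2_eq_square)
  qed
  show "q + inverse q \<noteq> 0"
  proof
    assume "q + inverse q = 0" then have "1 + q * q = 0" using q0 by (simp add: field_simps)
    then have "q * q = -1" by (simp add: eq_neg_iff_add_eq_0 add.commute)
    then have "q^4 = 1" by (metis mult_minus1 power2_eq_square power_mult[of q 2 2] num_double numeral_times_numeral mult_minus_right minus_minus mult_1_right)
    then show False using \<open>q^4 \<noteq> 1\<close> by simp
  qed
qed


definition evw :: "(nat \<Rightarrow> 'a) \<Rightarrow> nat list \<Rightarrow> 'a" where
  "evw v w = foldr (\<lambda>i acc. v i * acc) w 1"
definition ev :: "(nat \<Rightarrow> 'a) \<Rightarrow> ('f \<times> nat list) list \<Rightarrow> 'a" where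
  "ev v p = sum_list (map (\<lambda>(c, w). sm c (evw v w)) p)"

lemma evw_append: "evw v (w @ w') = evw v w * evw v w'"
  by (induct w) (simp_all add: evw_def mult.assoc)
lemma ev_Nil[simp]: "ev v [] = 0" by (simp add: ev_def)
lemma ev_Cons[simp]: "ev v ((c, w) # p) = sm c (evw v w) + ev v p" by (simp add: ev_def)
lemma ev_append[simp]: "ev v (p @ p') = ev v p + ev v p'" by (simp add: ev_def)

definition pmul :: "('f \<times> nat list) list \<Rightarrow> ('f \<times> nat list) list \<Rightarrow> ('f \<times> nat list) list" where
  "pmul p p' = concat (map (\<lambda>(c, w). map (\<lambda>(c', w'). (c * c', w @ w')) p') p)"
definition psc :: "'f \<Rightarrow> ('f \<times> nat list) list \<Rightarrow> ('f \<times> nat list) list" where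
  "psc a p = map (\<lambda>(c, w). (a * c, w)) p"
definition X :: "nat \<Rightarrow> ('f \<times> nat list) list" where "X i = [(1, [i])]"

lemma ev_psc[simp]: "ev v (psc a p) = sm a (ev v p)"
  by (induct p) (auto simp: psc_def)
lemma ev_X[simp]: "ev v (X i) = v i" by (simp add: X_def evw_def)
lemma ev_pmul1: "ev v (map (\<lambda>(c', w'). (c * c', w @ w')) p') = sm c (evw v w) * ev v p'"
  by (induct p') (auto simp: evw_append distrib_left)
lemma ev_pmul[simp]: "ev v (pmul p p') = ev v p * ev v p'"
  by (induct p) (auto simp: pmul_def ev_pmul1 distrib_right)

fun ins :: "'f \<times> nat list \<Rightarrow> ('f \<times> nat list) list \<Rightarrow> ('f \<times> nat list) list" where
  "ins x [] = [x]"
| "ins (c, w) ((c', w') # p) = (if w = w' then (c + c', w') # p else (c', w') # ins (c, w) p)"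

lemma ev_ins: "ev v (ins x p) = ev v (x # p)"
proof (induct x p rule: ins.induct)
  case (1 x) then show ?case by simp
next
  case (2 c w c' w' p) then show ?case by (auto simp: sm_addc algebra_simps)
qed

definition collect where "collect p = foldr ins p []"
lemma ev_collect: "ev v (collect p) = ev v p"
  by (induct p) (auto simp: collect_def ev_ins)

lemma ev_zero: "list_all (\<lambda>(c, w). c = 0) p \<Longrightarrow> ev v p = 0"
  by (induct p) auto

lemma check: "list_all (\<lambda>(c, w). c = 0) (collect p) \<Longrightarrow> ev v p = 0"
  using ev_zero ev_collect by metis


definition pneg where "pneg p = psc (-1) p"
definition pqc where "pqc p p' = psc q (pmul p p') @ psc (- inverse q) (pmul p' p)"
definition pcm where "pcm p p' = pmul p p' @ pneg (pmul p' p)"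
lemma ev_pneg[simp]: "ev v (pneg p) = - ev v p" by (simp add: pneg_def)
lemma ev_pqc[simp]: "ev v (pqc p p') = qcomm emb q (ev v p) (ev v p')"
  by (simp add: pqc_def qcomm_def sm_def mult.assoc e_minus)
lemma ev_pcm[simp]: "ev v (pcm p p') = comm (ev v p) (ev v p')"
  by (simp add: pcm_def comm_def)

lemmas pdefs = collect_def pmul_def psc_def X_def pneg_def pqc_def pcm_def

lemma I1: "Bd * Gt k = Gt k * Bd"
proof -
  define v where "v = nth [W0, W1, Gt k, Wm (k+1), Wp k, Wp (k+1), Wm k, Gt (k+1), G (k+1)]"
  have v: "v 0 = W0" "v 1 = W1" "v (Suc 0) = W1" "v 2 = Gt k" "v 3 = Wm (k+1)" "v 4 = Wp k" "v 5 = Wp (k+1)"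
     "v 6 = Wm k" "v 7 = Gt (k+1)" "v 8 = G (k+1)" by (simp_all add: v_def)
  define RA where "RA = pqc (X 2) (X 0) @ psc (- r) (X 3 @ pneg (X 4))"
  define RC where "RC = pqc (X 1) (X 2) @ psc (- r) (X 5 @ pneg (X 6))"
  define C0 where "C0 = pcm (X 0) (X 5) @ psc (- h) (X 7 @ pneg (X 8))"
  define C1 where "C1 = pcm (X 3) (X 1) @ psc (- h) (X 7 @ pneg (X 8))"
  define Cm where "Cm = pcm (X 0) (X 6)"
  define Cp where "Cp = pcm (X 1) (X 4)"
  define Bp where "Bp = psc (inverse q ^ 2) (pmul (X 1) (X 0)) @ pneg (pmul (X 0) (X 1))"
  have eRA: "ev v RA = 0" using rel(4)[of k] by (simp add: RA_def v r_def sm_def e_minus)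
  have eRC: "ev v RC = 0" using rel(6)[of k] by (simp add: RC_def v r_def sm_def e_minus)
  have eC0: "ev v C0 = 0" using rel(1)[of "k+1"] by (simp add: C0_def v h_def sm_def e_minus)
  have eC1: "ev v C1 = 0" using rel(2)[of "k+1"] by (simp add: C1_def v h_def sm_def e_minus)
  have eCm: "ev v Cm = 0" using rel(7)[of 0 k] by (simp add: Cm_def v)
  have eCp: "ev v Cp = 0" using rel(8)[of 0 k] by (simp add: Cp_def v)
  have eBp: "ev v Bp = Bd" by (simp add: Bp_def Bd_def v)
  have "ev v (pmul Bp (X 2) @ pneg (pmul (X 2) Bp) @ pneg (
      psc (inverse q * r) (pneg C0 @ Cm @ C1 @ Cp) @
      psc (inverse q) (pmul RC (X 0) @ pneg (pmul (X 0) RC) @ pmul RA (X 1) @ pneg (pmul (X 1) RA)))) = 0"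
    apply (rule check)
    apply (simp add: pdefs RA_def RC_def C0_def C1_def Cm_def Cp_def Bp_def)
    using q0 apply (simp add: power2_eq_square)
    done
  then show ?thesis by (simp add: eRA eRC eC0 eC1 eCm eCp eBp v)
qed


lemma qq: "q * q \<noteq> 1" "q * q \<noteq> -1" "q*q - 1 \<noteq> 0" "q*q + 1 \<noteq> 0" "1 + q * q \<noteq> 0"
proof -
  have "q^2 \<noteq> 1" using qroot by auto
  then show a: "q * q \<noteq> 1" by (simp add: power2_eq_square)
  have "q^4 \<noteq> 1" using qroot by auto
  show b: "q * q \<noteq> -1"
  proof
    assume "q * q = -1"
    then have "q^4 = 1" by (metis mult_minus1 power2_eq_square power_mult[of q 2 2] num_double numeral_times_numeral mult_minus_right minus_minus mult_1_right)
    then show False using \<open>q^4 \<noteq> 1\<close> by simp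
  qed
  show "q*q - 1 \<noteq> 0" using a by simp
  show "q*q + 1 \<noteq> 0" using b by (metis eq_neg_iff_add_eq_0)
  then show "1 + q*q \<noteq> 0" by (simp add: add.commute)
qed

lemma qint2: "qint q 2 = q + inverse q"
  using q0 qq by (simp add: qint_def field_simps power2_eq_square)

definition g0 where "g0 = - (q - inverse q) * qint q 2 ^ 2"
definition kap0 where "kap0 = inverse (qint q 2) * Bcoef q * inverse q"
definition kap1 where "kap1 = inverse (qint q 2) * Bcoef q * q"
definition u where "u = inverse (q - inverse q)"

definition dd where "dd = q - inverse q"
definition ss where "ss = q + inverse q"
lemma dd0: "dd \<noteq> 0" and ss0: "ss \<noteq> 0" using q_facts by (simp_all add: dd_def ss_def)
lemma g0_eq: "g0 = - dd * ss^2" by (simp add: g0_def dd_def ss_def qint2)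
lemma r_eq: "r = - (dd^2 * ss^2)"
  by (simp add: r_def rho_def dd_def ss_def power2_eq_square algebra_simps)
lemma u_eq: "u = inverse dd" by (simp add: u_def dd_def)
lemma h_eq: "h = inverse ss" by (simp add: h_def ss_def)
lemma Bcoef_eq: "Bcoef q = q * inverse (dd^2 * ss)"
proof -
  have "q^2 - inverse q^2 = dd * ss" by (simp add: dd_def ss_def power2_eq_square algebra_simps)
  then have "Bcoef q = q / (dd * (dd * ss))" unfolding Bcoef_def dd_def by simp
  then show ?thesis using dd0 ss0 by (simp add: field_simps power2_eq_square)
qed
lemma kap0_eq: "kap0 = inverse (dd^2 * ss^2)"
  unfolding kap0_def Bcoef_eq qint2 ss_def[symmetric] using q0 dd0 ss0 by (simp add: field_simps power2_eq_square)
lemma kap1_eq: "kap1 = q^2 * inverse (dd^2 * ss^2)"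
  unfolding kap1_def Bcoef_eq qint2 ss_def[symmetric] using q0 dd0 ss0 by (simp add: field_simps power2_eq_square)
lemmas ceqs = g0_eq r_eq u_eq h_eq kap0_eq kap1_eq

lemma Jm: "sm g0 (Wm (n+1)) = Gt n * W0 + sm g0 (Wp n) + sm kap0 (Bd * sm g0 (Wm n) - sm g0 (Wm n) * Bd)"
proof -
  define v where "v = nth [W0, W1, Wm n, Wm (n+1), Wp n, Gt n, G n]"
  have v: "v 0 = W0" "v 1 = W1" "v (Suc 0) = W1" "v 2 = Wm n" "v 3 = Wm (n+1)" "v 4 = Wp n" "v 5 = Gt n"
     "v 6 = G n" by (simp_all add: v_def)
  define RA where "RA = pqc (X 5) (X 0) @ psc (- r) (X 3 @ pneg (X 4))"
  define RG where "RG = pqc (X 0) (X 6) @ psc (- r) (X 3 @ pneg (X 4))"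
  define Cm where "Cm = pcm (X 0) (X 2)"
  define C1 where "C1 = pcm (X 2) (X 1) @ psc (- h) (X 5 @ pneg (X 6))"
  define Xi where "Xi = psc (inverse q ^ 2) (pmul (X 1) Cm @ pneg (pmul C1 (X 0))) @ pneg (pmul Cm (X 1)) @ pmul (X 0) C1"
  define Bp where "Bp = psc (inverse q ^ 2) (pmul (X 1) (X 0)) @ pneg (pmul (X 0) (X 1))"
  have eRA: "ev v RA = 0" using rel(4)[of n] by (simp add: RA_def v r_def sm_def e_minus)
  have eRG: "ev v RG = 0" using rel(3)[of n] by (simp add: RG_def v r_def sm_def e_minus)
  have eC1: "ev v C1 = 0" using rel(2)[of n] by (simp add: C1_def v h_def sm_def e_minus)
  have eCm: "ev v Cm = 0" using rel(7)[of 0 n] by (simp add: Cm_def v)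
  have eXi: "ev v Xi = 0" by (simp add: Xi_def eC1 eCm)
  have eBp: "ev v Bp = Bd" by (simp add: Bp_def Bd_def v)
  have "ev v (psc g0 (X 3) @ pneg (pmul (X 5) (X 0) @ psc g0 (X 4) @ psc kap0 (pmul Bp (psc g0 (X 2)) @ pneg (pmul (psc g0 (X 2)) Bp)))
      @ pneg (psc (- u) RA @ psc u Xi @ psc (u * h / q) (RA @ pneg RG))) = 0"
    apply (rule check)
    apply (simp add: pdefs RA_def RG_def C1_def Cm_def Xi_def Bp_def)
    apply (simp only: ceqs)
    using q0 dd0 ss0 apply (simp add: field_simps)
    apply (simp add: dd_def ss_def)
    using q0 apply (simp add: field_simps)
    apply (auto simp: power2_eq_square algebra_simps)
    done
  then show ?thesis by (simp add: eRA eRG eXi eBp v algebra_simps)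
qed


lemma Jp: "sm g0 (Wp (n+1)) = Gt n * W1 + sm g0 (Wm n) - sm kap1 (Bd * sm g0 (Wp n) - sm g0 (Wp n) * Bd)"
proof -
  define v where "v = nth [W0, W1, Wp n, Wp (n+1), Wm n, Gt n, G n]"
  have v: "v 0 = W0" "v 1 = W1" "v (Suc 0) = W1" "v 2 = Wp n" "v 3 = Wp (n+1)" "v 4 = Wm n" "v 5 = Gt n"
     "v 6 = G n" by (simp_all add: v_def)
  define RC where "RC = pqc (X 1) (X 5) @ psc (- r) (X 3 @ pneg (X 4))"
  define RG where "RG = pqc (X 6) (X 1) @ psc (- r) (X 3 @ pneg (X 4))"
  define Cp where "Cp = pcm (X 1) (X 2)"
  define C0 where "C0 = pcm (X 0) (X 2) @ psc (- h) (X 5 @ pneg (X 6))"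
  define Psi where "Psi = pmul Cp (X 0) @ pmul (X 1) C0 @ pneg (psc (q^2) (pmul C0 (X 1) @ pmul (X 0) Cp))"
  define Bp where "Bp = psc (inverse q ^ 2) (pmul (X 1) (X 0)) @ pneg (pmul (X 0) (X 1))"
  have eRC: "ev v RC = 0" using rel(6)[of n] by (simp add: RC_def v r_def sm_def e_minus)
  have eRG: "ev v RG = 0" using rel(5)[of n] by (simp add: RG_def v r_def sm_def e_minus)
  have eC0: "ev v C0 = 0" using rel(1)[of n] by (simp add: C0_def v h_def sm_def e_minus)
  have eCp: "ev v Cp = 0" using rel(8)[of 0 n] by (simp add: Cp_def v)
  have ePsi: "ev v Psi = 0" by (simp add: Psi_def eC0 eCp)
  have eBp: "ev v Bp = Bd" by (simp add: Bp_def Bd_def v)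
  have "ev v (psc g0 (X 3) @ pneg (pmul (X 5) (X 1) @ psc g0 (X 4) @ pneg (psc kap1 (pmul Bp (psc g0 (X 2)) @ pneg (pmul (psc g0 (X 2)) Bp))))
      @ pneg (psc (- u) RC @ psc (u * h * q) (RC @ pneg RG) @ pneg (psc u Psi))) = 0"
    apply (rule check)
    apply (simp add: pdefs RC_def RG_def C0_def Cp_def Psi_def Bp_def)
    apply (simp only: ceqs)
    using q0 dd0 ss0 apply (simp add: field_simps)
    apply (simp add: dd_def ss_def)
    using q0 apply (simp add: field_simps)
    apply (auto simp: power2_eq_square algebra_simps)
    done
  then show ?thesis by (simp add: eRC eRG ePsi eBp v algebra_simps)
qed

end



context oq begin

abbreviation BB where "BB j \<equiv> B0i emb q Wm Wp j"
definition ad where "ad Y = Bd * Y - Y * Bd"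

lemma ad_add: "ad (x + y) = ad x + ad y" by (simp add: ad_def algebra_simps)
lemma ad_diff: "ad (x - y) = ad x - ad y" by (simp add: ad_def algebra_simps)
lemma ad_sm: "ad (sm a Y) = sm a (ad Y)" by (simp add: ad_def)
lemma ad_sum: "ad (\<Sum>i\<in>A. f i) = (\<Sum>i\<in>A. ad (f i))"
  by (simp add: ad_def sum_distrib_left sum_distrib_right sum_subtractf)
lemma sm_sum: "sm a (\<Sum>i\<in>A. f i) = (\<Sum>i\<in>A. sm a (f i))"
  by (simp add: sm_def sum_distrib_left)

lemma Bdelta_eq: "Bdelta emb q Wm Wp = Bd"
  by (simp add: Bdelta_def Bd_def sm_def mult.assoc)

lemma B0_rec: "B0 emb q Wm Wp (Suc (Suc m)) = B0 emb q Wm Wp m + sm (Bcoef q) (ad (B0 emb q Wm Wp (Suc m)))"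
  by (simp add: Bdelta_eq ad_def comm_def sm_def)
lemma B1_rec: "B1 emb q Wm Wp (Suc (Suc m)) = B1 emb q Wm Wp m - sm (Bcoef q) (ad (B1 emb q Wm Wp (Suc m)))"
  by (simp add: Bdelta_eq ad_def comm_def sm_def)

lemma Brec: "BB (j + 1) = BB (j - 1) + sm (Bcoef q) (ad (BB j))"
proof (cases "j \<ge> 1")
  case True
  define m where "m = nat (j - 1)"
  have m: "j = int m + 1" using True by (simp add: m_def)
  have "nat (int m + 1 + 1) = Suc (Suc m)" "nat (int m + 1) = Suc m" by auto
  then show ?thesis using m B0_rec[of m] by (simp add: B0i_def)
next
  case False
  show ?thesis
  proof (cases "j = 0")
    case True then show ?thesis by (simp add: B0i_def Bdelta_eq ad_def comm_def sm_def)
  next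
    case False
    show ?thesis
    proof (cases "j = -1")
      case True then show ?thesis
        by (simp add: B0i_def Bdelta_eq ad_def comm_def sm_def eval_nat_numeral)
    next
      case False
      define m where "m = nat (- j - 2)"
      have m: "j = - int m - 2" using False \<open>\<not> j \<ge> 1\<close> \<open>j \<noteq> 0\<close> by (simp add: m_def)
      have e1: "nat (- (j + 1) - 1) = m" "nat (- (j - 1) - 1) = Suc (Suc m)" "nat (- j - 1) = Suc m"
        using m by auto
      have "\<not> j + 1 \<ge> 0" "\<not> j - 1 \<ge> 0" "\<not> j \<ge> 0" using m by auto
      then show ?thesis using e1 B1_rec[of m] by (simp add: B0i_def)
    qed
  qed
qed


definition D where "D k j = (\<Sum>l\<le>k. sm (of_nat (k choose l) * q powi (2 * int l - int k)) (BB (j + int k - 2 * int l)))"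

lemma Dlin: "D k (j+1) = D k (j-1) + sm (Bcoef q) (ad (D k j))"
proof -
  let ?a = "\<lambda>l. of_nat (k choose l) * q powi (2 * int l - int k)"
  have "D k (j+1) = (\<Sum>l\<le>k. sm (?a l) (BB ((j + int k - 2 * int l) + 1)))"
    unfolding D_def by (rule sum.cong) (simp_all add: algebra_simps)
  also have "\<dots> = (\<Sum>l\<le>k. sm (?a l) (BB ((j + int k - 2 * int l) - 1))) + (\<Sum>l\<le>k. sm (?a l) (sm (Bcoef q) (ad (BB (j + int k - 2 * int l)))))"
    by (simp add: Brec sum.distrib)
  also have "(\<Sum>l\<le>k. sm (?a l) (BB ((j + int k - 2 * int l) - 1))) = D k (j-1)"
    unfolding D_def by (rule sum.cong) (simp_all add: algebra_simps)
  also have "(\<Sum>l\<le>k. sm (?a l) (sm (Bcoef q) (ad (BB (j + int k - 2 * int l))))) = sm (Bcoef q) (ad (D k j))"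
    unfolding D_def by (simp add: sm_sum ad_sum ad_sm mult.commute)
  finally show ?thesis .
qed

lemma Dpascal: "D (Suc k) j = sm (inverse q) (D k (j+1)) + sm q (D k (j-1))"
proof -
  define T1 where "T1 l = sm (of_nat (k choose l) * q powi (2 * int l - int (Suc k))) (BB (j + int (Suc k) - 2 * int l))" for l
  define T2 where "T2 l = sm (of_nat (if l = 0 then 0 else k choose (l - 1)) * q powi (2 * int l - int (Suc k))) (BB (j + int (Suc k) - 2 * int l))" for l
  have "D (Suc k) j = (\<Sum>l\<le>Suc k. T1 l + T2 l)"
    unfolding D_def
  proof (rule sum.cong)
    fix l assume "l \<in> {..Suc k}"
    show "sm (of_nat (Suc k choose l) * q powi (2 * int l - int (Suc k))) (BB (j + int (Suc k) - 2 * int l)) = T1 l + T2 l"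
    proof (cases l)
      case 0 then show ?thesis by (simp add: T1_def T2_def)
    next
      case (Suc l') then show ?thesis
        by (simp add: T1_def T2_def sm_addc[symmetric] distrib_right add_ac)
    qed
  qed simp
  also have "\<dots> = (\<Sum>l\<le>Suc k. T1 l) + (\<Sum>l\<le>Suc k. T2 l)" by (rule sum.distrib)
  also have "(\<Sum>l\<le>Suc k. T1 l) = (\<Sum>l\<le>k. T1 l)" by (simp add: T1_def binomial_eq_0)
  also have "\<dots> = sm (inverse q) (D k (j+1))"
    unfolding D_def sm_sum
  proof (rule sum.cong)
    fix l assume "l \<in> {..k}"
    have "q powi (2 * int l - int (Suc k)) = q powi ((2 * int l - int k) - 1)" by (simp add: algebra_simps)
    also have "\<dots> = q powi (2 * int l - int k) / q" using q0 by (simp add: power_int_diff)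
    finally have coef: "of_nat (k choose l) * q powi (2 * int l - int (Suc k)) = inverse q * (of_nat (k choose l) * q powi (2 * int l - int k))"
      by (simp add: field_simps)
    have idx: "j + int (Suc k) - 2 * int l = j + 1 + int k - 2 * int l" by simp
    show "T1 l = sm (inverse q) (sm (of_nat (k choose l) * q powi (2 * int l - int k)) (BB (j + 1 + int k - 2 * int l)))"
      unfolding T1_def sm_sm by (simp only: coef idx)
  qed simp
  also have "(\<Sum>l\<le>Suc k. T2 l) = T2 0 + (\<Sum>l\<le>k. T2 (Suc l))" by (rule sum.atMost_Suc_shift)
  also have "\<dots> = sm q (D k (j-1))"
    unfolding D_def sm_sum
  proof -
    have "T2 0 = 0" by (simp add: T2_def)
    moreover have "(\<Sum>l\<le>k. T2 (Suc l)) = (\<Sum>l\<le>k. sm q (sm (of_nat (k choose l) * q powi (2 * int l - int k)) (BB (j - 1 + int k - 2 * int l))))"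
    proof (rule sum.cong)
      fix l assume "l \<in> {..k}"
      have "q powi (2 * int (Suc l) - int (Suc k)) = q powi ((2 * int l - int k) + 1)" by (simp add: algebra_simps)
      also have "\<dots> = q powi (2 * int l - int k) * q" using q0 by (simp add: power_int_add_1)
      finally have coef: "of_nat (k choose l) * q powi (2 * int (Suc l) - int (Suc k)) = q * (of_nat (k choose l) * q powi (2 * int l - int k))"
        by (simp add: field_simps)
      have idx: "j + int (Suc k) - 2 * int (Suc l) = j - 1 + int k - 2 * int l" by simp
      have T2s: "T2 (Suc l) = sm (of_nat (k choose l) * q powi (2 * int (Suc l) - int (Suc k))) (BB (j + int (Suc k) - 2 * int (Suc l)))"
        unfolding T2_def by simp
      show "T2 (Suc l) = sm q (sm (of_nat (k choose l) * q powi (2 * int l - int k)) (BB (j - 1 + int k - 2 * int l)))"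
        unfolding T2s sm_sm by (simp only: coef idx)
    qed simp
    ultimately show "T2 0 + (\<Sum>l\<le>k. T2 (Suc l)) = (\<Sum>l\<le>k. sm q (sm (of_nat (k choose l) * q powi (2 * int l - int k)) (BB (j - 1 + int k - 2 * int l))))"
      by simp
  qed
  finally show ?thesis .
qed


definition tt where "tt = inverse (qint q 2)"
definition E where "E k = sm (tt ^ k) (D k 0)"
definition F where "F k = sm (tt ^ k) (D k (-1))"

lemma tt_ss: "tt * (inverse q + q) = 1"
  using ss0 by (simp add: tt_def qint2 ss_def[symmetric] add.commute)

lemma Erec: "E (Suc k) = F k + sm kap0 (ad (E k))"
proof -
  have "D (Suc k) 0 = sm (inverse q) (D k (0+1)) + sm q (D k (0-1))" by (rule Dpascal)
  also have "D k (0+1) = D k (-1) + sm (Bcoef q) (ad (D k 0))" using Dlin[of k 0] by simp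
  finally have "D (Suc k) 0 = sm (inverse q) (D k (-1)) + sm q (D k (-1)) + sm (inverse q * Bcoef q) (ad (D k 0))"
    by (simp add: add_ac)
  also have "sm (inverse q) (D k (-1)) + sm q (D k (-1)) = sm (inverse q + q) (D k (-1))" by (simp add: sm_addc)
  finally have "E (Suc k) = sm (tt ^ k * (tt * (inverse q + q))) (D k (-1)) + sm (tt ^ Suc k * (inverse q * Bcoef q)) (ad (D k 0))"
    by (simp add: E_def ac_simps)
  also have "tt ^ k * (tt * (inverse q + q)) = tt ^ k" using tt_ss by simp
  also have "tt ^ Suc k * (inverse q * Bcoef q) = kap0 * tt ^ k" by (simp add: kap0_def tt_def ac_simps)
  finally show ?thesis by (simp add: F_def E_def ad_sm)
qed

lemma Frec: "F (Suc k) = E k - sm kap1 (ad (F k))"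
proof -
  have "D (Suc k) (-1) = sm (inverse q) (D k (-1+1)) + sm q (D k (-1-1))" by (rule Dpascal)
  also have "D k (-1-1) = D k 0 - sm (Bcoef q) (ad (D k (-1)))" using Dlin[of k "-1"] by simp
  finally have "D (Suc k) (-1) = sm (inverse q) (D k 0) + sm q (D k 0) - sm (q * Bcoef q) (ad (D k (-1)))"
    by (simp add: algebra_simps)
  also have "sm (inverse q) (D k 0) + sm q (D k 0) = sm (inverse q + q) (D k 0)" by (simp add: sm_addc)
  finally have "F (Suc k) = sm (tt ^ k * (tt * (inverse q + q))) (D k 0) - sm (tt ^ Suc k * (q * Bcoef q)) (ad (D k (-1)))"
    by (simp add: F_def ac_simps)
  also have "tt ^ k * (tt * (inverse q + q)) = tt ^ k" using tt_ss by simp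
  also have "tt ^ Suc k * (q * Bcoef q) = kap1 * tt ^ k" by (simp add: kap1_def tt_def ac_simps)
  finally show ?thesis by (simp add: F_def E_def ad_sm)
qed

abbreviation Gtl where "Gtl m \<equiv> Gtilde emb q Gt m"

lemma Gtl_ad: "Gtl m * ad Y = ad (Gtl m * Y)"
proof (cases m)
  case 0
  then show ?thesis by (simp add: Gtilde_def ad_def right_diff_distrib mult.assoc[symmetric] e_cen[of _ Bd])
next
  case (Suc m')
  then show ?thesis by (simp add: Gtilde_def ad_def right_diff_distrib mult.assoc[symmetric] I1[symmetric])
qed

definition S where "S n = (\<Sum>k\<le>n. Gtl (n - k) * E k)"
definition T where "T n = (\<Sum>k\<le>n. Gtl (n - k) * F k)"

lemma E0: "E 0 = W0" by (simp add: E_def D_def B0i_def)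
lemma F0: "F 0 = W1" by (simp add: F_def D_def B0i_def)

lemma Sstep: "S (Suc n) = Gt n * W0 + T n + sm kap0 (ad (S n))"
proof -
  have "S (Suc n) = Gtl (Suc n) * E 0 + (\<Sum>k\<le>n. Gtl (n - k) * E (Suc k))"
    unfolding S_def by (subst sum.atMost_Suc_shift) simp
  also have "(\<Sum>k\<le>n. Gtl (n - k) * E (Suc k)) = (\<Sum>k\<le>n. Gtl (n - k) * F k) + (\<Sum>k\<le>n. sm kap0 (ad (Gtl (n - k) * E k)))"
    by (simp add: Erec distrib_left sum.distrib Gtl_ad)
  finally show ?thesis by (simp add: E0 Gtilde_def T_def S_def sm_sum ad_sum)
qed

lemma Tstep: "T (Suc n) = Gt n * W1 + S n - sm kap1 (ad (T n))"
proof -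
  have "T (Suc n) = Gtl (Suc n) * F 0 + (\<Sum>k\<le>n. Gtl (n - k) * F (Suc k))"
    unfolding T_def by (subst sum.atMost_Suc_shift) simp
  also have "(\<Sum>k\<le>n. Gtl (n - k) * F (Suc k)) = (\<Sum>k\<le>n. Gtl (n - k) * E k) - (\<Sum>k\<le>n. sm kap1 (ad (Gtl (n - k) * F k)))"
    by (simp add: Frec right_diff_distrib sum_subtractf Gtl_ad)
  finally show ?thesis by (simp add: F0 Gtilde_def T_def S_def sm_sum ad_sum add_diff_eq)
qed

lemma main: "sm g0 (Wm n) = S n \<and> sm g0 (Wp n) = T n"
proof (induct n)
  case 0
  have "Gtl 0 = emb g0" by (simp add: Gtilde_def g0_def)
  then show ?case by (simp add: S_def T_def E0 F0 sm_def)
next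
  case (Suc n)
  then show ?case using Jm[of n] Jp[of n] by (simp add: Sstep Tstep ad_def)
qed


lemma g0ne: "g0 \<noteq> 0" using dd0 ss0 by (simp add: g0_eq)
lemma Q0: "qint q 2 \<noteq> 0" using ss0 by (simp add: qint2 ss_def)

lemma coef_eq: "- inverse (q - inverse q) * a * b * qint q 2 powi (- int k - 2) = inverse g0 * (tt ^ k * (a * b))"
proof -
  have e: "- int k - 2 = - int (k + 2)" by simp
  have p: "qint q 2 powi (- int k - 2) = inverse (qint q 2 ^ (k + 2))"
    unfolding e by (simp only: power_int_minus power_int_of_nat)
  show ?thesis unfolding p g0_def tt_def dd_def[symmetric] using Q0 dd0
    by (simp add: field_simps power_add power_inverse power2_eq_square)
qed

lemma Wm_sum: "Wm n = sm (inverse g0) (S n)"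
proof -
  have "sm (inverse g0) (S n) = sm (inverse g0) (sm g0 (Wm n))" using main[of n] by simp
  also have "\<dots> = Wm n" using g0ne by simp
  finally show ?thesis by simp
qed

lemma S_exp: "S n = (\<Sum>k\<le>n. \<Sum>l\<le>k. sm (tt ^ k * (of_nat (k choose l) * q powi (2 * int l - int k)))
      (Gtl (n - k) * BB (int k - 2 * int l)))"
  unfolding S_def
proof (rule sum.cong[OF refl])
  fix k assume "k \<in> {..n}"
  show "Gtl (n - k) * E k = (\<Sum>l\<le>k. sm (tt ^ k * (of_nat (k choose l) * q powi (2 * int l - int k)))
      (Gtl (n - k) * BB (int k - 2 * int l)))"
    unfolding E_def D_def sm_right sm_sum sum_distrib_left by simp
qed

lemma finalm: "Wm n = (\<Sum>k\<le>n. \<Sum>l\<le>k.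
            emb (- inverse (q - inverse q) * of_nat (k choose l) * q powi (2 * int l - int k)
                 * qint q 2 powi (- int k - 2))
            * Gtilde emb q Gt (n - k) * B0i emb q Wm Wp (int k - 2 * int l))"
proof -
  have "Wm n = sm (inverse g0) (S n)" by (rule Wm_sum)
  also have "\<dots> = (\<Sum>k\<le>n. \<Sum>l\<le>k. sm (inverse g0 * (tt ^ k * (of_nat (k choose l) * q powi (2 * int l - int k))))
      (Gtl (n - k) * BB (int k - 2 * int l)))"
    unfolding S_exp by (simp only: sm_sum sm_sm)
  also have "\<dots> = (\<Sum>k\<le>n. \<Sum>l\<le>k.
            emb (- inverse (q - inverse q) * of_nat (k choose l) * q powi (2 * int l - int k)
                 * qint q 2 powi (- int k - 2))
            * Gtilde emb q Gt (n - k) * B0i emb q Wm Wp (int k - 2 * int l))"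
    by (intro sum.cong refl) (simp only: coef_eq, simp only: sm_def mult.assoc)
  finally show ?thesis .
qed


lemma B1i_eq: "B1i emb q Wm Wp m = B0i emb q Wm Wp (- m - 1)" by (simp add: B1i_def B0i_def)

lemma Wp_sum: "Wp n = sm (inverse g0) (T n)"
proof -
  have "sm (inverse g0) (T n) = sm (inverse g0) (sm g0 (Wp n))" using main[of n] by simp
  also have "\<dots> = Wp n" using g0ne by simp
  finally show ?thesis by simp
qed

lemma T_exp: "T n = (\<Sum>k\<le>n. \<Sum>l\<le>k. sm (tt ^ k * (of_nat (k choose l) * q powi (2 * int l - int k)))
      (Gtl (n - k) * BB (-1 + int k - 2 * int l)))"
  unfolding T_def
proof (rule sum.cong[OF refl])
  fix k assume "k \<in> {..n}"
  show "Gtl (n - k) * F k = (\<Sum>l\<le>k. sm (tt ^ k * (of_nat (k choose l) * q powi (2 * int l - int k)))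
      (Gtl (n - k) * BB (-1 + int k - 2 * int l)))"
    unfolding F_def D_def sm_right sm_sum sum_distrib_left by simp
qed

lemma sum_rev: "(\<Sum>l\<le>(k::nat). g l) = (\<Sum>l\<le>k. g (k - l))"
proof -
  have "(\<Sum>l\<le>k. g (k - l)) = (\<Sum>l<Suc k. g (Suc k - Suc l))" by (simp add: lessThan_Suc_atMost)
  also have "\<dots> = (\<Sum>l<Suc k. g l)" by (rule sum.nat_diff_reindex)
  also have "\<dots> = (\<Sum>l\<le>k. g l)" by (simp add: lessThan_Suc_atMost)
  finally show ?thesis by simp
qed

lemma finalp: "Wp n = (\<Sum>k\<le>n. \<Sum>l\<le>k.
            emb (- inverse (q - inverse q) * of_nat (k choose l) * q powi (int k - 2 * int l)
                 * qint q 2 powi (- int k - 2))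
            * Gtilde emb q Gt (n - k) * B1i emb q Wm Wp (int k - 2 * int l))"
proof -
  have "Wp n = sm (inverse g0) (T n)" by (rule Wp_sum)
  also have "\<dots> = (\<Sum>k\<le>n. \<Sum>l\<le>k. sm (inverse g0 * (tt ^ k * (of_nat (k choose l) * q powi (2 * int l - int k))))
      (Gtl (n - k) * BB (-1 + int k - 2 * int l)))"
    unfolding T_exp by (simp only: sm_sum sm_sm)
  also have "\<dots> = (\<Sum>k\<le>n. \<Sum>l\<le>k.
            emb (- inverse (q - inverse q) * of_nat (k choose l) * q powi (int k - 2 * int l)
                 * qint q 2 powi (- int k - 2))
            * Gtilde emb q Gt (n - k) * B1i emb q Wm Wp (int k - 2 * int l))"
  proof (rule sum.cong[OF refl])
    fix k assume "k \<in> {..n}"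
    show "(\<Sum>l\<le>k. sm (inverse g0 * (tt ^ k * (of_nat (k choose l) * q powi (2 * int l - int k))))
      (Gtl (n - k) * BB (-1 + int k - 2 * int l))) = (\<Sum>l\<le>k.
            emb (- inverse (q - inverse q) * of_nat (k choose l) * q powi (int k - 2 * int l)
                 * qint q 2 powi (- int k - 2))
            * Gtilde emb q Gt (n - k) * B1i emb q Wm Wp (int k - 2 * int l))"
      apply (subst sum_rev[where k = k and g = "\<lambda>l. emb (- inverse (q - inverse q) * of_nat (k choose l) * q powi (int k - 2 * int l)
                 * qint q 2 powi (- int k - 2)) * Gtilde emb q Gt (n - k) * B1i emb q Wm Wp (int k - 2 * int l)"])
    proof (rule sum.cong[OF refl])
      fix l assume "l \<in> {..k}"
      then have lk: "l \<le> k" by simp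
      have c: "k choose (k - l) = k choose l" using binomial_symmetric[OF lk] by simp
      have i1: "int k - 2 * int (k - l) = 2 * int l - int k" using lk by (simp add: of_nat_diff)
      have i2: "- (2 * int l - int k) - 1 = -1 + int k - 2 * int l" by simp
      show "sm (inverse g0 * (tt ^ k * (of_nat (k choose l) * q powi (2 * int l - int k))))
      (Gtl (n - k) * BB (-1 + int k - 2 * int l)) = emb (- inverse (q - inverse q) * of_nat (k choose (k - l)) * q powi (int k - 2 * int (k - l))
                 * qint q 2 powi (- int k - 2)) * Gtilde emb q Gt (n - k) * B1i emb q Wm Wp (int k - 2 * int (k - l))"
        unfolding c i1 B1i_eq i2 coef_eq by (simp only: sm_def mult.assoc)
    qed
  qed
  finally show ?thesis .
qed

end

theorem proposition11p8:
  fixes q :: "'f::field" and emb :: "'f \<Rightarrow> 'a::ring_1"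
    and Wm Wp G Gt :: "nat \<Rightarrow> 'a"
  assumes "q \<noteq> 0" and "\<forall>m::nat. m > 0 \<longrightarrow> q ^ m \<noteq> 1"
    and "central_emb emb"
    and "Oq_rels emb q Wm Wp G Gt"
  shows "Wm n = (\<Sum>k\<le>n. \<Sum>l\<le>k.
            emb (- inverse (q - inverse q) * of_nat (k choose l) * q powi (2 * int l - int k)
                 * qint q 2 powi (- int k - 2))
            * Gtilde emb q Gt (n - k) * B0i emb q Wm Wp (int k - 2 * int l))
    \<and> Wp n = (\<Sum>k\<le>n. \<Sum>l\<le>k.
            emb (- inverse (q - inverse q) * of_nat (k choose l) * q powi (int k - 2 * int l)
                 * qint q 2 powi (- int k - 2))
            * Gtilde emb q Gt (n - k) * B1i emb q Wm Wp (int k - 2 * int l))"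
proof -
  interpret oq emb q Wm Wp G Gt using assms by unfold_locales
  show ?thesis using finalm finalp by blast
qed


end
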